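(* Let $R$ be a commutative ring with unit and let $G$ be a group with an upper central series $1=G_0\subset G_1\subset\cdots\subset G_n=G$ (so $G_i/G_{i-1}=Z(G/G_{i-1})$). If $G$ is $R$-torsion-free, then each factor group $G_i/G_{i-1}$, $i=1,\dots,n$, is $R$-torsion-free.
   Context: A group $G$ is $R$-torsion-free if for every finite subgroup $H\le G$, $|H|\cdot 1_R$ is invertible in $R$; equivalently, for every prime $p$ such that $G$ has a non-identity element $g$ with $g^p=1$, $p\cdot 1_R$ is invertible in $R$. *)

theory Defs
  imports "HOL-Algebra.Algebra"
begin

definition grp_center :: "('a, 'b) monoid_scheme \<Rightarrow> 'a set" where
  "grp_center G = {z \<in> carrier G. \<forall>x \<in> carrier G. z \<otimes>\<^bsub>G\<^esub> x = x \<otimes>\<^bsub>G\<^esub> z}"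

fun upper_central :: "('a, 'b) monoid_scheme \<Rightarrow> nat \<Rightarrow> 'a set" where
  "upper_central G 0 = {\<one>\<^bsub>G\<^esub>}"
| "upper_central G (Suc i) =
     {g \<in> carrier G. upper_central G i #>\<^bsub>G\<^esub> g \<in> grp_center (G Mod upper_central G i)}"

definition R_torsion_free :: "('r, 'c) ring_scheme \<Rightarrow> ('a, 'b) monoid_scheme \<Rightarrow> bool" where
  "R_torsion_free R G \<longleftrightarrow>
     (\<forall>H. subgroup H G \<and> finite H \<longrightarrow> add_pow R (card H) \<one>\<^bsub>R\<^esub> \<in> Units R)"

end

theory Submission
  imports Defs
begin

context group
begin

lemma rcos_eq_iff':
  assumes "subgroup U G" "a \<in> carrier G" "b \<in> carrier G"
  shows "(U #> a = U #> b) \<longleftrightarrow> a \<otimes> inv b \<in> U"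
proof
  assume "U #> a = U #> b"
  then have "a \<in> U #> b" using repr_independenceD[OF assms(1) assms(2)] by simp
  then show "a \<otimes> inv b \<in> U" using subgroup.rcos_module[OF assms(1) is_group assms(3) assms(2)] by simp
next
  assume "a \<otimes> inv b \<in> U"
  then have "a \<in> U #> b" using subgroup.rcos_module[OF assms(1) is_group assms(3) assms(2)] by simp
  then show "U #> a = U #> b" using repr_independence[OF _ assms(3) assms(1)] by simp
qed

lemma comm_one_iff:
  assumes "a \<in> carrier G" "b \<in> carrier G"
  shows "a \<otimes> b \<otimes> inv (b \<otimes> a) = a \<otimes> b \<otimes> inv a \<otimes> inv b"
  using assms by (simp add: inv_mult_group m_assoc)

lemma center_char:
  assumes "U \<lhd> G" "g \<in> carrier G"
  shows "(U #> g \<in> grp_center (G Mod U)) \<longleftrightarrow> (\<forall>y\<in>carrier G. g \<otimes> y \<otimes> inv g \<otimes> inv y \<in> U)"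
proof -
  interpret N: normal U G by fact
  have sg: "subgroup U G" using assms(1) normal_imp_subgroup by blast
  have "(U #> g \<in> grp_center (G Mod U)) \<longleftrightarrow> (\<forall>y\<in>carrier G. (U #> g) <#> (U #> y) = (U #> y) <#> (U #> g))"
    unfolding grp_center_def carrier_FactGroup mult_FactGroup using assms(2) by auto
  also have "\<dots> \<longleftrightarrow> (\<forall>y\<in>carrier G. U #> (g \<otimes> y) = U #> (y \<otimes> g))"
    using assms(2) by (simp add: N.rcos_sum)
  also have "\<dots> \<longleftrightarrow> (\<forall>y\<in>carrier G. g \<otimes> y \<otimes> inv g \<otimes> inv y \<in> U)"
    using assms(2) by (simp add: rcos_eq_iff'[OF sg] comm_one_iff)
  finally show ?thesis .
qed

lemma canc1 [simp]: "x \<in> carrier G \<Longrightarrow> z \<in> carrier G \<Longrightarrow> inv x \<otimes> (x \<otimes> z) = z"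
  by (simp add: m_assoc[symmetric])

lemma canc2 [simp]: "x \<in> carrier G \<Longrightarrow> z \<in> carrier G \<Longrightarrow> x \<otimes> (inv x \<otimes> z) = z"
  by (simp add: m_assoc[symmetric])

lemma id1:
  assumes "g \<in> carrier G" "y \<in> carrier G"
  shows "inv g \<otimes> y \<otimes> inv (inv g) \<otimes> inv y = inv g \<otimes> inv (g \<otimes> y \<otimes> inv g \<otimes> inv y) \<otimes> inv (inv g)"
  using assms by (simp add: m_assoc inv_mult_group)

lemma id2:
  assumes "g \<in> carrier G" "h \<in> carrier G" "y \<in> carrier G"
  shows "(g \<otimes> h) \<otimes> y \<otimes> inv (g \<otimes> h) \<otimes> inv y = (g \<otimes> (h \<otimes> y \<otimes> inv h \<otimes> inv y) \<otimes> inv g) \<otimes> (g \<otimes> y \<otimes> inv g \<otimes> inv y)"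
  using assms by (simp add: m_assoc inv_mult_group)

lemma id3:
  assumes "g \<in> carrier G" "x \<in> carrier G" "y \<in> carrier G"
  shows "(x \<otimes> g \<otimes> inv x) \<otimes> y \<otimes> inv (x \<otimes> g \<otimes> inv x) \<otimes> inv y = x \<otimes> (g \<otimes> (inv x \<otimes> y \<otimes> x) \<otimes> inv g \<otimes> inv (inv x \<otimes> y \<otimes> x)) \<otimes> inv x"
  using assms by (simp add: m_assoc inv_mult_group)

lemma uc_mem:
  assumes "upper_central G i \<lhd> G"
  shows "g \<in> upper_central G (Suc i) \<longleftrightarrow> g \<in> carrier G \<and> (\<forall>y\<in>carrier G. g \<otimes> y \<otimes> inv g \<otimes> inv y \<in> upper_central G i)"
  using center_char[OF assms, of g] by auto

lemma uc_normal_step: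
  assumes nU: "upper_central G i \<lhd> G"
  shows "upper_central G (Suc i) \<lhd> G"
proof -
  let ?U = "upper_central G i"
  let ?V = "upper_central G (Suc i)"
  have sU: "subgroup ?U G" using nU normal_imp_subgroup by blast
  have conj: "x \<otimes> h \<otimes> inv x \<in> ?U" if "x \<in> carrier G" "h \<in> ?U" for x h
    using normal_invE(2)[OF nU] that by blast
  note mem = uc_mem[OF nU]
  have sV: "subgroup ?V G"
  proof (rule subgroupI)
    show "?V \<subseteq> carrier G" using mem by blast
    show "?V \<noteq> {}"
    proof -
      have "\<one> \<in> ?V" using mem subgroup.one_closed[OF sU] by simp
      then show ?thesis by blast
    qed
    show "inv a \<in> ?V" if a: "a \<in> ?V" for a
    proof -
      have ac: "a \<in> carrier G" using a mem by blast
      have "inv a \<otimes> y \<otimes> inv (inv a) \<otimes> inv y \<in> ?U" if y: "y \<in> carrier G" for y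
      proof -
        have "a \<otimes> y \<otimes> inv a \<otimes> inv y \<in> ?U" using a y mem by blast
        then have "inv (a \<otimes> y \<otimes> inv a \<otimes> inv y) \<in> ?U" using subgroup.m_inv_closed[OF sU] by blast
        then have "inv a \<otimes> inv (a \<otimes> y \<otimes> inv a \<otimes> inv y) \<otimes> inv (inv a) \<in> ?U"
          using conj[of "inv a"] ac by blast
        then show ?thesis using id1[OF ac y] by simp
      qed
      then show ?thesis using mem ac by simp
    qed
    show "a \<otimes> b \<in> ?V" if a: "a \<in> ?V" and b: "b \<in> ?V" for a b
    proof -
      have ac: "a \<in> carrier G" using a mem by blast
      have bc: "b \<in> carrier G" using b mem by blast
      have "(a \<otimes> b) \<otimes> y \<otimes> inv (a \<otimes> b) \<otimes> inv y \<in> ?U" if y: "y \<in> carrier G" for y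
      proof -
        have "b \<otimes> y \<otimes> inv b \<otimes> inv y \<in> ?U" using b y mem by blast
        then have "a \<otimes> (b \<otimes> y \<otimes> inv b \<otimes> inv y) \<otimes> inv a \<in> ?U" using conj ac by blast
        moreover have "a \<otimes> y \<otimes> inv a \<otimes> inv y \<in> ?U" using a y mem by blast
        ultimately show ?thesis using id2[OF ac bc y] subgroup.m_closed[OF sU] by simp
      qed
      then show ?thesis using mem ac bc by simp
    qed
  qed
  show ?thesis
  proof (rule normal_invI[OF sV])
    fix x h assume x: "x \<in> carrier G" and h: "h \<in> ?V"
    have hc: "h \<in> carrier G" using h mem by blast
    have "(x \<otimes> h \<otimes> inv x) \<otimes> y \<otimes> inv (x \<otimes> h \<otimes> inv x) \<otimes> inv y \<in> ?U" if y: "y \<in> carrier G" for y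
    proof -
      have "h \<otimes> (inv x \<otimes> y \<otimes> x) \<otimes> inv h \<otimes> inv (inv x \<otimes> y \<otimes> x) \<in> ?U"
        using h mem x y by simp
      then have "x \<otimes> (h \<otimes> (inv x \<otimes> y \<otimes> x) \<otimes> inv h \<otimes> inv (inv x \<otimes> y \<otimes> x)) \<otimes> inv x \<in> ?U"
        using conj x by blast
      then show ?thesis using id3[OF hc x y] by simp
    qed
    then show "x \<otimes> h \<otimes> inv x \<in> ?V" using mem x hc by simp
  qed
qed

lemma uc_props:
  "upper_central G i \<lhd> G \<and> upper_central G i \<subseteq> upper_central G (Suc i)"
proof (induction i)
  case 0
  have n0: "upper_central G 0 \<lhd> G" using one_is_normal by simp
  have "\<one> \<in> upper_central G (Suc 0)" using uc_mem[OF n0] by simp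
  then show ?case using n0 by simp
next
  case (Suc i)
  have nU: "upper_central G i \<lhd> G" using Suc by blast
  have nV: "upper_central G (Suc i) \<lhd> G" using uc_normal_step[OF nU] .
  have "upper_central G (Suc i) \<subseteq> upper_central G (Suc (Suc i))"
  proof
    fix g assume g: "g \<in> upper_central G (Suc i)"
    then have "g \<in> carrier G" using uc_mem[OF nU] by blast
    moreover have "\<forall>y\<in>carrier G. g \<otimes> y \<otimes> inv g \<otimes> inv y \<in> upper_central G (Suc i)"
      using g uc_mem[OF nU] Suc.IH by blast
    ultimately show "g \<in> upper_central G (Suc (Suc i))" using uc_mem[OF nV] by blast
  qed
  then show ?case using nV by blast
qed

lemma pow_comm_aux:
  assumes "a \<in> carrier G" "c \<in> carrier G" "c \<otimes> a = a \<otimes> c"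
  shows "c [^] (k::nat) \<otimes> a = a \<otimes> c [^] k"
proof (induction k)
  case 0 then show ?case using assms by simp
next
  case (Suc k)
  have "c [^] Suc k \<otimes> a = c [^] k \<otimes> (c \<otimes> a)" using assms by (simp add: m_assoc)
  also have "\<dots> = (c [^] k \<otimes> a) \<otimes> c" using assms by (simp add: m_assoc)
  also have "\<dots> = a \<otimes> c [^] Suc k" using assms Suc by (simp add: m_assoc)
  finally show ?case .
qed

lemma comm_pow:
  assumes a: "a \<in> carrier G" and b: "b \<in> carrier G"
    and cc: "(a \<otimes> b \<otimes> inv a \<otimes> inv b) \<otimes> a = a \<otimes> (a \<otimes> b \<otimes> inv a \<otimes> inv b)"
  shows "a [^] (k::nat) \<otimes> b \<otimes> inv (a [^] k) \<otimes> inv b = (a \<otimes> b \<otimes> inv a \<otimes> inv b) [^] k"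
proof (induction k)
  case 0 then show ?case using assms by simp
next
  case (Suc k)
  let ?c = "a \<otimes> b \<otimes> inv a \<otimes> inv b"
  have c: "?c \<in> carrier G" using a b by simp
  have "a [^] Suc k \<otimes> b \<otimes> inv (a [^] Suc k) \<otimes> inv b = (a \<otimes> a [^] k) \<otimes> b \<otimes> inv (a \<otimes> a [^] k) \<otimes> inv b"
    using a nat_pow_Suc2[OF a, of k] by (simp del: nat_pow_Suc)
  also have "\<dots> = (a \<otimes> (a [^] k \<otimes> b \<otimes> inv (a [^] k) \<otimes> inv b) \<otimes> inv a) \<otimes> ?c"
    using id2[of a "a [^] k" b] a b by simp
  also have "\<dots> = (a \<otimes> ?c [^] k \<otimes> inv a) \<otimes> ?c" using Suc by simp
  also have "\<dots> = (?c [^] k \<otimes> a \<otimes> inv a) \<otimes> ?c" using pow_comm_aux[OF a c cc, of k] by simp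
  also have "\<dots> = ?c [^] Suc k" using a c by (simp add: m_assoc)
  finally show ?case .
qed

lemma uc_torsion:
  assumes nt: "\<forall>g\<in>carrier G. g [^] (p::nat) = \<one> \<longrightarrow> g = \<one>"
  shows "g \<in> upper_central G (Suc i) \<Longrightarrow> g [^] p \<in> upper_central G i \<Longrightarrow> g \<in> upper_central G i"
proof (induction i arbitrary: g)
  case 0
  have n0: "upper_central G 0 \<lhd> G" using one_is_normal by simp
  have "g \<in> carrier G" using 0 uc_mem[OF n0] by blast
  then show ?case using 0 nt by simp
next
  case (Suc i)
  let ?N = "upper_central G i"
  let ?V = "upper_central G (Suc i)"
  have nN: "?N \<lhd> G" using uc_props by blast
  have nV: "?V \<lhd> G" using uc_props by blast
  interpret N: normal ?N G by (rule nN)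
  have sN: "subgroup ?N G" using nN normal_imp_subgroup by blast
  have Qg: "group (G Mod ?N)" by (rule N.factorgroup_is_group)
  interpret pi: group_hom G "G Mod ?N" "\<lambda>x. ?N #> x"
    using Qg N.r_coset_hom_Mod by (simp add: group_hom_def group_hom_axioms_def is_group)
  have gc: "g \<in> carrier G" using Suc.prems(1) uc_mem[OF nV] by blast
  have "y \<in> carrier G \<Longrightarrow> g \<otimes> y \<otimes> inv g \<otimes> inv y \<in> ?N" for y
  proof -
    assume y: "y \<in> carrier G"
    let ?c = "g \<otimes> y \<otimes> inv g \<otimes> inv y"
    have cc: "?c \<in> carrier G" using gc y by simp
    have cV: "?c \<in> ?V" using Suc.prems(1) uc_mem[OF nV] y by blast
    have dN: "g [^] p \<otimes> y \<otimes> inv (g [^] p) \<otimes> inv y \<in> ?N"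
      using Suc.prems(2) uc_mem[OF nN] y by blast
    have cent: "?N #> ?c \<in> grp_center (G Mod ?N)" using cV cc by simp
    have ccomm: "(?N #> ?c) \<otimes>\<^bsub>G Mod ?N\<^esub> (?N #> g) = (?N #> g) \<otimes>\<^bsub>G Mod ?N\<^esub> (?N #> ?c)"
      using cent gc unfolding grp_center_def by auto
    have e1: "?N #> ?c = (?N #> g) \<otimes>\<^bsub>G Mod ?N\<^esub> (?N #> y) \<otimes>\<^bsub>G Mod ?N\<^esub> inv\<^bsub>G Mod ?N\<^esub> (?N #> g) \<otimes>\<^bsub>G Mod ?N\<^esub> inv\<^bsub>G Mod ?N\<^esub> (?N #> y)"
      using gc y by (simp del: mult_FactGroup)
    have "?N = ?N #> (g [^] p \<otimes> y \<otimes> inv (g [^] p) \<otimes> inv y)"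
      using coset_join2[OF _ sN dN] gc y by simp
    also have "\<dots> = (?N #> g) [^]\<^bsub>G Mod ?N\<^esub> p \<otimes>\<^bsub>G Mod ?N\<^esub> (?N #> y) \<otimes>\<^bsub>G Mod ?N\<^esub> inv\<^bsub>G Mod ?N\<^esub> ((?N #> g) [^]\<^bsub>G Mod ?N\<^esub> p) \<otimes>\<^bsub>G Mod ?N\<^esub> inv\<^bsub>G Mod ?N\<^esub> (?N #> y)"
      using gc y by (simp del: mult_FactGroup add: pi.hom_nat_pow)
    also have "\<dots> = (?N #> ?c) [^]\<^bsub>G Mod ?N\<^esub> p"
      using group.comm_pow[OF Qg, of "?N #> g" "?N #> y" p] ccomm e1 gc y by simp
    also have "\<dots> = ?N #> (?c [^] p)" using cc by (simp add: pi.hom_nat_pow)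
    finally have "?N #> (?c [^] p) = ?N" by simp
    then have "?c [^] p \<in> ?N" using rcos_self[OF _ sN, of "?c [^] p"] cc by simp
    then show "?c \<in> ?N" using Suc.IH cV by blast
  qed
  then show ?case using uc_mem[OF nN] gc by blast
qed

end


lemma no_p_torsion:
  fixes G :: "('a, 'b) monoid_scheme" (structure)
  assumes "group G" "R_torsion_free R G" "Factorial_Ring.prime (p::nat)"
    and "add_pow R p \<one>\<^bsub>R\<^esub> \<notin> Units R"
  shows "\<forall>g\<in>carrier G. g [^]\<^bsub>G\<^esub> p = \<one>\<^bsub>G\<^esub> \<longrightarrow> g = \<one>\<^bsub>G\<^esub>"
proof (intro ballI impI, rule ccontr)
  interpret group G by fact
  fix g assume g: "g \<in> carrier G" and gp: "g [^] p = \<one>" and gn: "g \<noteq> \<one>"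
  have "ord g dvd p" using pow_eq_id[OF g] gp by simp
  moreover have "ord g \<noteq> 1" using ord_eq_1[OF g] gn by simp
  ultimately have op: "ord g = p" using assms(3) by (meson prime_nat_iff)
  have sg: "subgroup (generate G {g}) G" using generate_is_subgroup g by simp
  have cp: "card (generate G {g}) = p" using generate_pow_card[OF g] op by simp
  then have "finite (generate G {g})" using assms(3) card_ge_0_finite prime_gt_0_nat by blast
  then have "add_pow R (card (generate G {g})) \<one>\<^bsub>R\<^esub> \<in> Units R"
    using assms(2) sg unfolding R_torsion_free_def by blast
  then show False using cp assms(4) by simp
qed

lemma units_from_primes:
  assumes "cring R"
  shows "n > 0 \<Longrightarrow> (\<forall>p. Factorial_Ring.prime p \<and> p dvd n \<longrightarrow> add_pow R p \<one>\<^bsub>R\<^esub> \<in> Units R) \<Longrightarrow> add_pow R (n::nat) \<one>\<^bsub>R\<^esub> \<in> Units R"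
proof (induction n rule: less_induct)
  case (less n)
  interpret cring R by fact
  show ?case
  proof (cases "n = 1")
    case True
    then show ?thesis by simp
  next
    case False
    obtain p where p: "Factorial_Ring.prime p" "p dvd n" using prime_factor_nat[OF False] by blast
    obtain m where m: "n = p * m" using p(2) by blast
    have mpos: "m > 0" using less.prems(1) m by simp
    have "m < n" using m mpos prime_gt_1_nat[OF p(1)] by simp
    moreover have "\<forall>q. Factorial_Ring.prime q \<and> q dvd m \<longrightarrow> add_pow R q \<one>\<^bsub>R\<^esub> \<in> Units R"
      using less.prems(2) m by auto
    ultimately have mu: "add_pow R m \<one>\<^bsub>R\<^esub> \<in> Units R" using less.IH mpos by blast
    have pu: "add_pow R p \<one>\<^bsub>R\<^esub> \<in> Units R" using less.prems(2) p by blast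
    have "add_pow R p \<one>\<^bsub>R\<^esub> \<otimes>\<^bsub>R\<^esub> add_pow R m \<one>\<^bsub>R\<^esub> = add_pow R m (add_pow R p \<one>\<^bsub>R\<^esub>)"
      using add_pow_rdistr[of "add_pow R p \<one>\<^bsub>R\<^esub>" "\<one>\<^bsub>R\<^esub>" m] by simp
    also have "\<dots> = add_pow R n \<one>\<^bsub>R\<^esub>" using add.nat_pow_pow[of "\<one>\<^bsub>R\<^esub>" m p] m by (simp add: mult.commute)
    finally show ?thesis using Units_m_closed[OF pu mu] by simp
  qed
qed

theorem lemma3p4:
  fixes R :: "('r, 'c) ring_scheme" and G :: "('a, 'b) monoid_scheme" and n :: nat
  assumes "cring R"
    and "group G"
    and "upper_central G n = carrier G"
    and "R_torsion_free R G"
  shows "\<forall>i \<in> {1..n}.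
           R_torsion_free R ((G\<lparr>carrier := upper_central G i\<rparr>) Mod upper_central G (i - 1))"
proof
  fix i assume i: "i \<in> {1..n}"
  then obtain j where ij: "i = Suc j" by (cases i) auto
  interpret G: group G by fact
  let ?N = "upper_central G j"
  let ?M = "upper_central G (Suc j)"
  let ?GM = "G\<lparr>carrier := ?M\<rparr>"
  let ?Q = "?GM Mod ?N"
  have nN: "?N \<lhd> G" and NM: "?N \<subseteq> ?M" using G.uc_props by blast+
  have nM: "?M \<lhd> G" using G.uc_props by blast
  have sM: "subgroup ?M G" using nM normal_imp_subgroup by blast
  have sN: "subgroup ?N G" using nN normal_imp_subgroup by blast
  have nNM: "?N \<lhd> ?GM" using G.normal_restrict_supergroup[OF sM nN NM] .
  interpret NM: normal ?N ?GM by (rule nNM)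
  have Qg: "group ?Q" by (rule NM.factorgroup_is_group)
  have rc: "r_coset ?GM ?N x = ?N #>\<^bsub>G\<^esub> x" for x by (simp add: r_coset_def)
  have "R_torsion_free R ?Q"
    unfolding R_torsion_free_def
  proof (intro allI impI)
    fix H assume H: "subgroup H ?Q \<and> finite H"
    have Hs: "subgroup H ?Q" and Hf: "finite H" using H by auto
    have cpos: "card H > 0" using Hf subgroup.one_closed[OF Hs] card_gt_0_iff by blast
    have "\<forall>p. Factorial_Ring.prime p \<and> p dvd card H \<longrightarrow> add_pow R p \<one>\<^bsub>R\<^esub> \<in> Units R"
    proof (intro allI impI)
      fix p assume p: "Factorial_Ring.prime p \<and> p dvd card H"
      show "add_pow R p \<one>\<^bsub>R\<^esub> \<in> Units R"
      proof (rule ccontr)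
        assume nu: "add_pow R p \<one>\<^bsub>R\<^esub> \<notin> Units R"
        have nt: "\<forall>g\<in>carrier G. g [^]\<^bsub>G\<^esub> p = \<one>\<^bsub>G\<^esub> \<longrightarrow> g = \<one>\<^bsub>G\<^esub>"
          using no_p_torsion[OF assms(2) assms(4) _ nu] p by blast
        let ?K = "?Q\<lparr>carrier := H\<rparr>"
        have Kg: "group ?K" using subgroup.subgroup_is_group[OF Hs Qg] .
        have oK: "order ?K = p ^ 1 * (card H div p)" using p by (simp add: order_def)
        obtain S where S: "subgroup S ?K" "card S = p ^ 1"
          using sylow_thm[OF _ Kg oK] p Hf by auto
        have Sg: "group (?K\<lparr>carrier := S\<rparr>)" using subgroup.subgroup_is_group[OF S(1) Kg] .
        have c2: "card S \<ge> 2" using p prime_ge_2_nat S by simp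
        have "\<not> S \<subseteq> {\<one>\<^bsub>?Q\<^esub>}"
        proof
          assume "S \<subseteq> {\<one>\<^bsub>?Q\<^esub>}"
          then have "card S \<le> 1" using card_mono[of "{\<one>\<^bsub>?Q\<^esub>}" S] by simp 
          then show False using c2 by simp
        qed
        then obtain s where s: "s \<in> S" "s \<noteq> \<one>\<^bsub>?Q\<^esub>" by blast
        have sH: "s \<in> H" using subgroup.subset[OF S(1)] s by auto
        have sQ: "s \<in> carrier ?Q" using subgroup.subset[OF Hs] sH by blast
        have "s [^]\<^bsub>?K\<lparr>carrier := S\<rparr>\<^esub> (order (?K\<lparr>carrier := S\<rparr>)) = \<one>\<^bsub>?K\<lparr>carrier := S\<rparr>\<^esub>"
          using group.pow_order_eq_1[OF Sg] s by simp
        then have sp: "s [^]\<^bsub>?Q\<^esub> p = \<one>\<^bsub>?Q\<^esub>" using S(2) by (simp add: order_def nat_pow_def)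
        obtain g where g: "g \<in> ?M" "s = r_coset ?GM ?N g"
          using sQ unfolding carrier_FactGroup by auto
        have gc: "g \<in> carrier G" using sM g subgroup.subset by blast
        have "s [^]\<^bsub>?Q\<^esub> p = r_coset ?GM ?N (g [^]\<^bsub>?GM\<^esub> p)"
          using NM.FactGroup_pow g by simp
        also have "g [^]\<^bsub>?GM\<^esub> p = g [^]\<^bsub>G\<^esub> p" by (simp add: nat_pow_def)
        finally have "?N #>\<^bsub>G\<^esub> (g [^]\<^bsub>G\<^esub> p) = ?N" using sp rc by simp
        then have "g [^]\<^bsub>G\<^esub> p \<in> ?N" using G.rcos_self[OF _ sN, of "g [^]\<^bsub>G\<^esub> p"] gc by simp
        then have "g \<in> ?N" using G.uc_torsion[OF nt] g by blast
        then have "?N #>\<^bsub>G\<^esub> g = ?N" using G.coset_join2[OF gc sN] by simp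
        then show False using s g rc by simp
      qed
    qed
    then show "add_pow R (card H) \<one>\<^bsub>R\<^esub> \<in> Units R"
      using units_from_primes[OF assms(1) cpos] by blast
  qed
  then show "R_torsion_free R (G\<lparr>carrier := upper_central G i\<rparr> Mod upper_central G (i - 1))"
    using ij by simp
qed

end
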